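(* Let $p,q\in\mathbb{R}$, $j\neq n$ and $M\in\mathcal{K}_o^n$. Then $\widetilde{W}_{p,q,j}(M,N,Q)$ is a valuation in $N$ on $\mathcal{K}_o^n$ and a valuation in $Q$ on $\mathcal{S}_o^n$; that is, for $Q\in\mathcal{S}_o^n$ and $N_1,N_2\in\mathcal{K}_o^n$ with $N_1\cup N_2\in\mathcal{K}_o^n$, $$\widetilde{W}_{p,q,j}(M,N_1\cup N_2,Q)+\widetilde{W}_{p,q,j}(M,N_1\cap N_2,Q)=\widetilde{W}_{p,q,j}(M,N_1,Q)+\widetilde{W}_{p,q,j}(M,N_2,Q),$$ and for $N\in\mathcal{K}_o^n$ and $Q_1,Q_2\in\mathcal{S}_o^n$, $$\widetilde{W}_{p,q,j}(M,N,Q_1\cup Q_2)+\widetilde{W}_{p,q,j}(M,N,Q_1\cap Q_2)=\widetilde{W}_{p,q,j}(M,N,Q_1)+\widetilde{W}_{p,q,j}(M,N,Q_2).$$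
   Context: $\mathcal{K}_o^n$: convex bodies in $\mathbb{R}^n$ containing the origin in their interiors; $\mathcal{S}_o^n$: compact sets star-shaped about the origin with positive continuous radial function $\rho_Q(x)=\max\{\lambda\ge0:\lambda x\in Q\}$. $h_M$ is the support function, $du$ spherical Lebesgue measure; $\alpha_M(u)$ is, for almost every $u\in S^{n-1}$, the unique outer unit normal of $M$ at $\rho_M(u)u$. The $(p,q)$-mixed quermassintegral is $\widetilde{W}_{p,q,j}(M,N,Q)=\frac1n\int_{S^{n-1}}\Big(\frac{h_N(\alpha_M(u))}{h_M(\alpha_M(u))}\Big)^p\rho_M^q(u)\rho_Q^{n-q-j}(u)\,du$. *)

theory Defs
  imports "HOL-Analysis.Analysis"
begin

definition convex_body_o :: "'a::euclidean_space set \<Rightarrow> bool" where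
  "convex_body_o K \<longleftrightarrow> compact K \<and> convex K \<and> 0 \<in> interior K"

definition support_fun :: "'a::euclidean_space set \<Rightarrow> 'a \<Rightarrow> real" where
  "support_fun K v = Sup ((\<lambda>x. x \<bullet> v) ` K)"

definition radial_fun :: "'a::euclidean_space set \<Rightarrow> 'a \<Rightarrow> real" where
  "radial_fun Q x = Sup {t::real. 0 \<le> t \<and> t *\<^sub>R x \<in> Q}"

definition star_body_o :: "'a::euclidean_space set \<Rightarrow> bool" where
  "star_body_o Q \<longleftrightarrow> compact Q \<and> 0 \<in> Q \<and>
     (\<forall>x\<in>Q. \<forall>t::real. 0 \<le> t \<and> t \<le> 1 \<longrightarrow> t *\<^sub>R x \<in> Q) \<and>
     (\<forall>u\<in>sphere 0 1. radial_fun Q u > 0) \<and>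
     continuous_on (sphere 0 1) (radial_fun Q)"

definition outer_unit_normal :: "'a::euclidean_space set \<Rightarrow> 'a \<Rightarrow> 'a \<Rightarrow> bool" where
  "outer_unit_normal K x v \<longleftrightarrow> norm v = 1 \<and> (\<forall>y\<in>K. y \<bullet> v \<le> x \<bullet> v)"

text \<open>Radial Gauss map alpha_K(u): the unique outer unit normal of K at
  rho_K(u) u, when it is unique (which holds for almost every u); otherwise 0
  (a null set, irrelevant for the integral).\<close>
definition radial_gauss :: "'a::euclidean_space set \<Rightarrow> 'a \<Rightarrow> 'a" where
  "radial_gauss K u =
     (if \<exists>!v. outer_unit_normal K (radial_fun K u *\<^sub>R u) v
      then THE v. outer_unit_normal K (radial_fun K u *\<^sub>R u) v else 0)"

text \<open>Integral over the unit sphere with respect to spherical Lebesgue measure,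
  expressed through the cone-measure identity
  int_{S^{n-1}} f du = n * int_{B^n} f(x/|x|) dx.\<close>
definition sphere_integral :: "('a::euclidean_space \<Rightarrow> real) \<Rightarrow> real" where
  "sphere_integral f = real DIM('a) *
     (LINT x | lebesgue. indicator (ball 0 1 - {0}) x * f (x /\<^sub>R norm x))"

definition mixed_quermass :: "real \<Rightarrow> real \<Rightarrow> real \<Rightarrow> 'a::euclidean_space set \<Rightarrow> 'a set \<Rightarrow> 'a set \<Rightarrow> real" where
  "mixed_quermass p q j M N Q = (1 / real DIM('a)) * sphere_integral (\<lambda>u.
      (support_fun N (radial_gauss M u) / support_fun M (radial_gauss M u)) powr p
      * radial_fun M u powr q * radial_fun Q u powr (real DIM('a) - q - j))"

end

theory Submission
  imports Defs
begin

lemma sf_bdd: "compact (K::'a::euclidean_space set) \<Longrightarrow> bdd_above ((\<lambda>x. x \<bullet> v) ` K)"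
  by (intro bounded_imp_bdd_above compact_imp_bounded compact_continuous_image continuous_intros)

lemma sf_upper: "compact K \<Longrightarrow> x \<in> K \<Longrightarrow> x \<bullet> v \<le> support_fun K v"
  unfolding support_fun_def by (intro cSup_upper sf_bdd) auto

lemma sf_attain:
  assumes "compact K" "K \<noteq> {}"
  obtains x where "x \<in> K" "support_fun K v = x \<bullet> v"
proof -
  obtain x where x: "x \<in> K" "\<forall>y\<in>K. y \<bullet> v \<le> x \<bullet> v"
  proof -
    have "continuous_on K (\<lambda>x. x \<bullet> v)" by (intro continuous_intros)
    from continuous_attains_sup[OF assms this] show ?thesis using that by blast
  qed
  have "support_fun K v = x \<bullet> v" unfolding support_fun_def
    by (rule cSup_eq_maximum) (use x in auto)
  with x that show ?thesis by blast
qed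

lemma sf_least: "K \<noteq> {} \<Longrightarrow> (\<And>x. x \<in> K \<Longrightarrow> x \<bullet> v \<le> c) \<Longrightarrow> support_fun K v \<le> c"
  unfolding support_fun_def by (rule cSup_least) auto

lemma sf_zero: "K \<noteq> {} \<Longrightarrow> support_fun K 0 = 0"
  unfolding support_fun_def by (simp add: image_constant_conv)

lemma sf_union:
  assumes "compact K1" "compact K2" "K1 \<noteq> {}" "K2 \<noteq> {}"
  shows "support_fun (K1 \<union> K2) v = max (support_fun K1 v) (support_fun K2 v)"
  unfolding support_fun_def image_Un
  by (subst cSup_union_distrib) (use assms sf_bdd[OF assms(1)] sf_bdd[OF assms(2)] in \<open>auto simp: sup_max\<close>)

lemma sf_inter_aux:
  fixes K1 K2 :: "'a::euclidean_space set"
  assumes c1: "compact K1" and c2: "compact K2" and ne: "K1 \<noteq> {}" "K2 \<noteq> {}"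
    and cv: "convex (K1 \<union> K2)" and le: "support_fun K1 v \<le> support_fun K2 v"
  shows "\<exists>z \<in> K1 \<inter> K2. support_fun K1 v \<le> z \<bullet> v"
proof -
  obtain x1 where x1: "x1 \<in> K1" "support_fun K1 v = x1 \<bullet> v" using sf_attain[OF c1 ne(1)] by blast
  obtain x2 where x2: "x2 \<in> K2" "support_fun K2 v = x2 \<bullet> v" using sf_attain[OF c2 ne(2)] by blast
  have sub: "closed_segment x1 x2 \<subseteq> K1 \<union> K2"
    using cv x1 x2 by (intro closed_segment_subset) auto
  have "connected (closed_segment x1 x2)" by simp
  moreover have "closed K1" "closed K2" using c1 c2 compact_imp_closed by auto
  moreover have "K1 \<inter> closed_segment x1 x2 \<noteq> {}" "K2 \<inter> closed_segment x1 x2 \<noteq> {}"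
    using x1 x2 by auto
  ultimately have "\<not> (K1 \<inter> K2 \<inter> closed_segment x1 x2 = {})"
    unfolding connected_closed using sub by blast
  then obtain z where z: "z \<in> K1" "z \<in> K2" "z \<in> closed_segment x1 x2" by blast
  then obtain t where t: "0 \<le> t" "t \<le> 1" "z = (1 - t) *\<^sub>R x1 + t *\<^sub>R x2"
    unfolding closed_segment_def by auto
  have "z \<bullet> v = (1 - t) * (x1 \<bullet> v) + t * (x2 \<bullet> v)" using t by (simp add: inner_add_left)
  also have "\<dots> \<ge> x1 \<bullet> v"
  proof -
    have "t * (x1 \<bullet> v) \<le> t * (x2 \<bullet> v)" using t le x1 x2 by (intro mult_left_mono) auto
    then show ?thesis by (simp add: algebra_simps)
  qed
  finally show ?thesis using z x1 by auto
qed

lemma sf_inter: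
  fixes K1 K2 :: "'a::euclidean_space set"
  assumes c1: "compact K1" and c2: "compact K2" and ne: "K1 \<inter> K2 \<noteq> {}"
    and cv: "convex (K1 \<union> K2)"
  shows "support_fun (K1 \<inter> K2) v = min (support_fun K1 v) (support_fun K2 v)"
proof -
  have ne1: "K1 \<noteq> {}" "K2 \<noteq> {}" using ne by auto
  have up: "support_fun (K1 \<inter> K2) v \<le> min (support_fun K1 v) (support_fun K2 v)"
    using ne c1 c2 by (auto intro!: sf_least sf_upper)
  have ci: "compact (K1 \<inter> K2)" using c1 c2 by (simp add: compact_Int)
  show ?thesis
  proof (cases "support_fun K1 v \<le> support_fun K2 v")
    case True
    then obtain z where "z \<in> K1 \<inter> K2" "support_fun K1 v \<le> z \<bullet> v"
      using sf_inter_aux[OF c1 c2 ne1 cv] by blast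
    then show ?thesis using up sf_upper[OF ci, of z v] True by linarith
  next
    case False
    then obtain z where "z \<in> K2 \<inter> K1" "support_fun K2 v \<le> z \<bullet> v"
    proof -
      have cv': "convex (K2 \<union> K1)" using cv by (simp add: Un_commute)
      have "support_fun K2 v \<le> support_fun K1 v" using False by linarith
      from sf_inter_aux[OF c2 c1 ne1(2,1) cv' this] show ?thesis using that by blast
    qed
    then show ?thesis using up sf_upper[OF ci, of z v] False by (auto simp: Int_commute)
  qed
qed

lemma sf_lip:
  fixes K :: "'a::euclidean_space set"
  assumes "compact K" "K \<noteq> {}" "\<And>x. x \<in> K \<Longrightarrow> norm x \<le> R"
  shows "support_fun K v \<le> support_fun K w + R * norm (v - w)"
proof (rule sf_least[OF assms(2)])
  fix x assume x: "x \<in> K"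
  have "x \<bullet> v = x \<bullet> w + x \<bullet> (v - w)" by (simp add: inner_diff_right)
  also have "x \<bullet> (v - w) \<le> norm x * norm (v - w)" by (rule norm_cauchy_schwarz)
  also have "\<dots> \<le> R * norm (v - w)" using assms(3)[OF x] by (simp add: mult_right_mono)
  finally show "x \<bullet> v \<le> support_fun K w + R * norm (v - w)"
    using sf_upper[OF assms(1) x, of w] by linarith
qed

lemma sf_cont:
  fixes K :: "'a::euclidean_space set"
  assumes "compact K" "K \<noteq> {}"
  shows "continuous_on UNIV (support_fun K)"
proof -
  obtain R where R: "\<And>x. x \<in> K \<Longrightarrow> norm x \<le> R" "R > 0"
    using compact_imp_bounded[OF assms(1)] bounded_pos by metis
  have "\<bar>support_fun K v - support_fun K w\<bar> \<le> R * dist v w" for v w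
    using sf_lip[OF assms R(1), of v w] sf_lip[OF assms R(1), of w v]
    by (simp add: dist_norm norm_minus_commute abs_le_iff)
  then show ?thesis
    unfolding continuous_on_iff
    by (metis R(2) dist_real_def le_less_trans mult.commute pos_less_divide_eq UNIV_I zero_less_divide_iff)
qed

lemma sf_pos:
  fixes K :: "'a::euclidean_space set"
  assumes "compact K" "0 \<in> interior K" "norm v = 1"
  shows "support_fun K v > 0"
proof -
  obtain e where e: "e > 0" "ball 0 e \<subseteq> K" using assms(2) mem_interior by blast
  have "(e/2) *\<^sub>R v \<in> K" using e assms(3) by (intro subsetD[OF e(2)]) auto
  from sf_upper[OF assms(1) this, of v] show ?thesis using e assms(3)
    by (simp add: inner_commute power2_norm_eq_inner[symmetric])
qed


lemma sphere_nz: "u \<in> sphere (0::'a::real_normed_vector) 1 \<Longrightarrow> u \<noteq> 0 \<and> norm u = 1"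
  by auto

lemma rf_props:
  fixes Q :: "'a::euclidean_space set"
  assumes "compact Q" "0 \<in> Q" "u \<noteq> 0"
  shows "radial_fun Q u \<ge> 0" "radial_fun Q u *\<^sub>R u \<in> Q"
    "\<And>t. 0 \<le> t \<Longrightarrow> t *\<^sub>R u \<in> Q \<Longrightarrow> t \<le> radial_fun Q u"
proof -
  let ?A = "{t::real. 0 \<le> t \<and> t *\<^sub>R u \<in> Q}"
  have ne: "?A \<noteq> {}" using assms(2) by auto
  obtain R where R: "\<And>x. x \<in> Q \<Longrightarrow> norm x \<le> R"
    using compact_imp_bounded[OF assms(1)] bounded_iff by metis
  have bdd: "bdd_above ?A"
  proof (rule bdd_aboveI)
    fix t assume "t \<in> ?A"
    then have "t * norm u \<le> R" using R[of "t *\<^sub>R u"] by auto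
    then show "t \<le> R / norm u" using assms(3) by (simp add: field_simps)
  qed
  have eq: "?A = {0..} \<inter> (\<lambda>t. t *\<^sub>R u) -` Q" by auto
  have "closed ((\<lambda>t. t *\<^sub>R u) -` Q)"
    by (rule continuous_closed_vimage[OF compact_imp_closed[OF assms(1)]]) (intro continuous_intros)
  then have "closed ?A" unfolding eq by (intro closed_Int closed_atLeast)
  then have "Sup ?A \<in> ?A" by (rule closed_contains_Sup[OF ne bdd])
  then show "radial_fun Q u \<ge> 0" "radial_fun Q u *\<^sub>R u \<in> Q" unfolding radial_fun_def by auto
  show "\<And>t. 0 \<le> t \<Longrightarrow> t *\<^sub>R u \<in> Q \<Longrightarrow> t \<le> radial_fun Q u"
    unfolding radial_fun_def using bdd by (auto intro: cSup_upper)
qed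

lemma rf_star:
  fixes Q :: "'a::euclidean_space set"
  assumes "compact Q" "0 \<in> Q" "u \<noteq> 0"
    and st: "\<forall>x\<in>Q. \<forall>t::real. 0 \<le> t \<and> t \<le> 1 \<longrightarrow> t *\<^sub>R x \<in> Q"
    and t: "0 \<le> t" "t \<le> radial_fun Q u"
  shows "t *\<^sub>R u \<in> Q"
proof (cases "radial_fun Q u = 0")
  case True then show ?thesis using t assms(2) by auto
next
  case False
  then have pos: "radial_fun Q u > 0" using rf_props(1)[OF assms(1-3)] by auto
  have "(t / radial_fun Q u) *\<^sub>R (radial_fun Q u *\<^sub>R u) \<in> Q"
  proof -
    have h: "0 \<le> t / radial_fun Q u \<and> t / radial_fun Q u \<le> 1" using t pos by auto
    have H: "\<forall>t::real. 0 \<le> t \<and> t \<le> 1 \<longrightarrow> t *\<^sub>R (radial_fun Q u *\<^sub>R u) \<in> Q"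
      using bspec[OF st rf_props(2)[OF assms(1-3)]] .
    show ?thesis using mp[OF spec[OF H, of "t / radial_fun Q u"] h] .
  qed
  then show ?thesis using pos by simp
qed

lemma star_compact: "star_body_o Q \<Longrightarrow> compact Q" by (simp add: star_body_o_def)

lemma rf_union:
  fixes Q1 :: "'a::euclidean_space set"
  assumes "star_body_o Q1" "star_body_o Q2" "u \<noteq> 0"
  shows "radial_fun (Q1 \<union> Q2) u = max (radial_fun Q1 u) (radial_fun Q2 u)"
proof -
  have c: "compact Q1" "compact Q2" "compact (Q1 \<union> Q2)" "0 \<in> Q1" "0 \<in> Q2" "0 \<in> Q1 \<union> Q2"
    using assms by (auto simp: star_body_o_def)
  note P1 = rf_props[OF c(1) c(4) assms(3)] and P2 = rf_props[OF c(2) c(5) assms(3)]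
    and P = rf_props[OF c(3) c(6) assms(3)]
  have "radial_fun Q1 u \<le> radial_fun (Q1 \<union> Q2) u" "radial_fun Q2 u \<le> radial_fun (Q1 \<union> Q2) u"
    using P1 P2 P by auto
  moreover have "radial_fun (Q1 \<union> Q2) u *\<^sub>R u \<in> Q1 \<or> radial_fun (Q1 \<union> Q2) u *\<^sub>R u \<in> Q2"
    using P(2) by simp
  then have "radial_fun (Q1 \<union> Q2) u \<le> radial_fun Q1 u \<or> radial_fun (Q1 \<union> Q2) u \<le> radial_fun Q2 u"
    using P1(3)[OF P(1)] P2(3)[OF P(1)] by blast
  ultimately show ?thesis by (auto simp: max_def)
qed

lemma rf_inter:
  fixes Q1 :: "'a::euclidean_space set"
  assumes "star_body_o Q1" "star_body_o Q2" "u \<noteq> 0"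
  shows "radial_fun (Q1 \<inter> Q2) u = min (radial_fun Q1 u) (radial_fun Q2 u)"
proof -
  have c: "compact Q1" "compact Q2" "compact (Q1 \<inter> Q2)" "0 \<in> Q1" "0 \<in> Q2" "0 \<in> Q1 \<inter> Q2"
    using assms by (auto simp: star_body_o_def compact_Int)
  have st: "\<forall>x\<in>Q1. \<forall>t::real. 0 \<le> t \<and> t \<le> 1 \<longrightarrow> t *\<^sub>R x \<in> Q1"
     "\<forall>x\<in>Q2. \<forall>t::real. 0 \<le> t \<and> t \<le> 1 \<longrightarrow> t *\<^sub>R x \<in> Q2"
    using assms by (auto simp: star_body_o_def)
  note P1 = rf_props[OF c(1) c(4) assms(3)] and P2 = rf_props[OF c(2) c(5) assms(3)]
    and P = rf_props[OF c(3) c(6) assms(3)]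
  have "min (radial_fun Q1 u) (radial_fun Q2 u) *\<^sub>R u \<in> Q1 \<inter> Q2"
  proof -
    have "min (radial_fun Q1 u) (radial_fun Q2 u) *\<^sub>R u \<in> Q1"
      by (rule rf_star[OF c(1) c(4) assms(3) st(1)]) (use P1(1) P2(1) in auto)
    moreover have "min (radial_fun Q1 u) (radial_fun Q2 u) *\<^sub>R u \<in> Q2"
      by (rule rf_star[OF c(2) c(5) assms(3) st(2)]) (use P1(1) P2(1) in auto)
    ultimately show ?thesis by blast
  qed
  then have "min (radial_fun Q1 u) (radial_fun Q2 u) \<le> radial_fun (Q1 \<inter> Q2) u"
    using P(3) P1(1) P2(1) by simp
  moreover have "radial_fun (Q1 \<inter> Q2) u \<le> radial_fun Q1 u" "radial_fun (Q1 \<inter> Q2) u \<le> radial_fun Q2 u"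
    using P1(3)[OF P(1)] P2(3)[OF P(1)] P(2) by auto
  ultimately show ?thesis by linarith
qed

lemma star_union:
  fixes Q1 :: "'a::euclidean_space set"
  assumes "star_body_o Q1" "star_body_o Q2"
  shows "star_body_o (Q1 \<union> Q2)"
proof -
  have "continuous_on (sphere 0 1) (\<lambda>u. max (radial_fun Q1 u) (radial_fun Q2 u))"
    using assms by (intro continuous_on_max) (auto simp: star_body_o_def)
  moreover have "\<And>u. u \<in> sphere (0::'a) 1 \<Longrightarrow> max (radial_fun Q1 u) (radial_fun Q2 u) = radial_fun (Q1 \<union> Q2) u"
    using rf_union[OF assms] sphere_nz by metis
  ultimately have "continuous_on (sphere 0 1) (radial_fun (Q1 \<union> Q2))"
    by (rule continuous_on_eq) simp
  moreover have "\<forall>u\<in>sphere 0 1. radial_fun (Q1 \<union> Q2) u > 0"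
    using rf_union[OF assms] assms sphere_nz unfolding star_body_o_def by (metis max.strict_coboundedI1)
  ultimately show ?thesis using assms unfolding star_body_o_def by (auto simp: compact_Un)
qed

lemma cb_frontier_iff:
  fixes M :: "'a::euclidean_space set"
  assumes M: "convex_body_o M" and u: "u \<noteq> 0"
  shows "0 < k \<and> k *\<^sub>R u \<in> frontier M \<longleftrightarrow> radial_fun M u = k"
proof -
  have cM: "compact M" "convex M" "0 \<in> interior M" using M by (auto simp: convex_body_o_def)
  have z: "0 \<in> M" using cM interior_subset by blast
  note P = rf_props[OF cM(1) z u]
  have clM: "closure M = M" using cM compact_imp_closed closure_closed by blast
  obtain e where e: "e > 0" "ball 0 e \<subseteq> M" using cM(3) mem_interior by blast
  have "(e / 2 / norm u) *\<^sub>R u \<in> M" using e u by (intro subsetD[OF e(2)]) auto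
  then have pos: "radial_fun M u > 0" using P(3)[of "e/2/norm u"] e u
    by (smt (verit) divide_pos_pos zero_less_norm_iff)
  have notint: "radial_fun M u *\<^sub>R u \<notin> interior M"
  proof
    assume "radial_fun M u *\<^sub>R u \<in> interior M"
    then obtain d where d: "d > 0" "ball (radial_fun M u *\<^sub>R u) d \<subseteq> M" using mem_interior by blast
    have "(radial_fun M u + d / 2 / norm u) *\<^sub>R u \<in> M"
      using d u by (intro subsetD[OF d(2)]) (auto simp: dist_norm algebra_simps)
    from P(3)[OF _ this] have "radial_fun M u + d / 2 / norm u \<le> radial_fun M u" using pos d u by auto
    then show False using d u by (smt (verit) divide_pos_pos zero_less_norm_iff)
  qed
  show ?thesis
  proof
    assume k: "0 < k \<and> k *\<^sub>R u \<in> frontier M"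
    then have kM: "k *\<^sub>R u \<in> M" "k *\<^sub>R u \<notin> interior M" using clM by (auto simp: frontier_def)
    have le: "k \<le> radial_fun M u" using P(3) k kM by auto
    show "radial_fun M u = k"
    proof (rule ccontr)
      assume "radial_fun M u \<noteq> k"
      then have lt: "k < radial_fun M u" using le by auto
      have "radial_fun M u *\<^sub>R u - (1 - k / radial_fun M u) *\<^sub>R (radial_fun M u *\<^sub>R u - 0) \<in> interior M"
        using lt k pos P(2) clM
        by (intro mem_interior_closure_convex_shrink[OF cM(2) cM(3)]) auto
      moreover have "radial_fun M u *\<^sub>R u - (1 - k / radial_fun M u) *\<^sub>R (radial_fun M u *\<^sub>R u - 0) = k *\<^sub>R u"
        using pos by (simp add: algebra_simps)
      ultimately show False using kM by auto
    qed
  next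
    assume "radial_fun M u = k"
    then show "0 < k \<and> k *\<^sub>R u \<in> frontier M" using pos P(2) notint clM by (auto simp: frontier_def)
  qed
qed

lemma cb_pos:
  fixes M :: "'a::euclidean_space set"
  assumes M: "convex_body_o M" and u: "u \<noteq> 0"
  shows "radial_fun M u > 0" "radial_fun M u *\<^sub>R u \<in> M"
  using cb_frontier_iff[OF M u, of "radial_fun M u"] M
  by (auto simp: convex_body_o_def frontier_def dest: compact_imp_closed)

lemma cb_cont:
  fixes M :: "'a::euclidean_space set"
  assumes M: "convex_body_o M"
  shows "continuous_on (UNIV - {0}) (\<lambda>x. radial_fun M x *\<^sub>R x)"
proof (rule continuous_on_compact_surface_projection[where S = "frontier M"])
  have cM: "compact M" "0 \<in> interior M" using M by (auto simp: convex_body_o_def)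
  show "compact (frontier M)" using cM by (simp add: compact_frontier)
  show "frontier M \<subseteq> UNIV - {0}" using cM by (auto simp: frontier_def)
  show "cone (UNIV::'a set)" by (simp add: cone_def)
  show "\<And>x k. x \<in> UNIV - {0} \<Longrightarrow> (0 < k \<and> k *\<^sub>R x \<in> frontier M) = (radial_fun M x = k)"
    using cb_frontier_iff[OF M] by blast
qed

lemma cb_rcont:
  fixes M :: "'a::euclidean_space set"
  assumes M: "convex_body_o M"
  shows "continuous_on (sphere 0 1) (radial_fun M)"
proof -
  have "continuous_on (sphere 0 1) (\<lambda>x. norm (radial_fun M x *\<^sub>R x))"
    by (intro continuous_on_norm continuous_on_subset[OF cb_cont[OF M]]) auto
  moreover have "\<And>x. x \<in> sphere (0::'a) 1 \<Longrightarrow> norm (radial_fun M x *\<^sub>R x) = radial_fun M x"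
  proof -
    fix x :: 'a assume "x \<in> sphere 0 1"
    then have "x \<noteq> 0" "norm x = 1" using sphere_nz by auto
    then show "norm (radial_fun M x *\<^sub>R x) = radial_fun M x" using cb_pos(1)[OF M \<open>x \<noteq> 0\<close>] by simp
  qed
  ultimately show ?thesis by (rule continuous_on_eq) simp
qed


definition GM :: "'a::euclidean_space set \<Rightarrow> ('a \<times> 'a) set" where
  "GM M = {p \<in> sphere 0 1 \<times> sphere 0 1. \<forall>y\<in>M. y \<bullet> fst p \<le> (radial_fun M (snd p) *\<^sub>R snd p) \<bullet> fst p}"

definition S0 :: "'a::euclidean_space set \<Rightarrow> 'a set" where
  "S0 M = {u \<in> sphere 0 1. \<exists>!v. outer_unit_normal M (radial_fun M u *\<^sub>R u) v}"

lemma GM_iff: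
  "u \<in> sphere 0 1 \<Longrightarrow> outer_unit_normal M (radial_fun M u *\<^sub>R u) v \<longleftrightarrow> (v, u) \<in> GM M"
  unfolding GM_def outer_unit_normal_def by auto

lemma Xcont_sphere:
  fixes M :: "'a::euclidean_space set"
  assumes M: "convex_body_o M"
  shows "continuous_on (sphere 0 1) (\<lambda>x. radial_fun M x *\<^sub>R x)"
  by (rule continuous_on_subset[OF cb_cont[OF M]]) auto

lemma GM_closed:
  fixes M :: "'a::euclidean_space set"
  assumes M: "convex_body_o M"
  shows "closed (GM M)"
proof -
  have c: "continuous_on (sphere 0 1 \<times> sphere 0 1) (\<lambda>p::'a\<times>'a. (radial_fun M (snd p) *\<^sub>R snd p) \<bullet> fst p)"
    by (intro continuous_intros continuous_on_compose2[OF Xcont_sphere[OF M]]) auto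
  have cl: "closed (sphere (0::'a) 1 \<times> sphere (0::'a) 1)" by (intro closed_Times closed_sphere)
  have "GM M = (sphere 0 1 \<times> sphere 0 1) \<inter> (\<Inter>y\<in>M. {p \<in> sphere 0 1 \<times> sphere 0 1. y \<bullet> fst p \<le> (radial_fun M (snd p) *\<^sub>R snd p) \<bullet> fst p})"
    unfolding GM_def by auto
  also have "closed \<dots>"
  proof (intro closed_Int closed_INT ballI continuous_on_closed_Collect_le cl c)
    fix y :: 'a
    have "continuous_on UNIV (\<lambda>p::'a\<times>'a. y \<bullet> fst p)" by (intro continuous_intros)
    then show "continuous_on (sphere 0 1 \<times> sphere 0 1) (\<lambda>p::'a\<times>'a. y \<bullet> fst p)"
      by (rule continuous_on_subset) simp
  qed
  finally show ?thesis .
qed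

lemma alpha_S0:
  fixes M :: "'a::euclidean_space set"
  assumes "u \<in> S0 M"
  shows "outer_unit_normal M (radial_fun M u *\<^sub>R u) (radial_gauss M u)"
    "radial_gauss M u \<in> sphere 0 1" "(radial_gauss M u, u) \<in> GM M"
    "\<And>v. outer_unit_normal M (radial_fun M u *\<^sub>R u) v \<Longrightarrow> v = radial_gauss M u"
proof -
  have ex: "\<exists>!v. outer_unit_normal M (radial_fun M u *\<^sub>R u) v" and u: "u \<in> sphere 0 1"
    using assms by (auto simp: S0_def)
  show o: "outer_unit_normal M (radial_fun M u *\<^sub>R u) (radial_gauss M u)"
    unfolding radial_gauss_def using ex theI'[OF ex] by simp
  then show "radial_gauss M u \<in> sphere 0 1" by (simp add: outer_unit_normal_def)
  show "(radial_gauss M u, u) \<in> GM M" using o GM_iff[OF u] by blast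
  show "\<And>v. outer_unit_normal M (radial_fun M u *\<^sub>R u) v \<Longrightarrow> v = radial_gauss M u"
    using ex o by blast
qed

lemma alpha_notS0:
  "u \<in> sphere 0 1 \<Longrightarrow> u \<notin> S0 M \<Longrightarrow> radial_gauss M u = 0"
  unfolding radial_gauss_def S0_def by auto

lemma alpha_range: "radial_gauss M u \<in> sphere 0 1 \<or> radial_gauss M u = 0"
proof (cases "\<exists>!v. outer_unit_normal M (radial_fun M u *\<^sub>R u) v")
  case True
  then have "outer_unit_normal M (radial_fun M u *\<^sub>R u) (radial_gauss M u)"
    unfolding radial_gauss_def using theI'[OF True] by simp
  then show ?thesis by (simp add: outer_unit_normal_def)
next
  case False then show ?thesis unfolding radial_gauss_def by simp
qed

lemma closed_proj:
  fixes U :: "('b::euclidean_space \<times> 'a::euclidean_space) set"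
  assumes "compact S" "closed T" "closed U" "U \<subseteq> S \<times> T"
  shows "closed {y. \<exists>x. x \<in> S \<and> (x, y) \<in> U}"
proof -
  have "closedin (top_of_set (S \<times> T)) U" using assms by (simp add: closed_subset)
  from closedin_compact_projection[OF assms(1) this] show ?thesis
    using assms(2) closedin_closed_trans by blast
qed

lemma S0_eq:
  fixes M :: "'a::euclidean_space set"
  shows "S0 M = {u. \<exists>v. v \<in> sphere 0 1 \<and> (v, u) \<in> GM M} -
     (\<Union>k. {u. \<exists>vw. vw \<in> sphere 0 1 \<times> sphere 0 1 \<and> (vw, u) \<in>
        {q. (fst (fst q), snd q) \<in> GM M \<and> (snd (fst q), snd q) \<in> GM M \<and> 1 / real (Suc k) \<le> dist (fst (fst q)) (snd (fst q))}})"
  (is "_ = ?T - ?D")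
proof (intro set_eqI iffI)
  fix u assume u: "u \<in> S0 M"
  note A = alpha_S0[OF u]
  have "u \<in> ?T" using A by blast
  moreover have "u \<notin> ?D"
  proof
    assume "u \<in> ?D"
    then obtain k v w where "(v, u) \<in> GM M" "(w, u) \<in> GM M" "1 / real (Suc k) \<le> dist v w" by auto
    moreover have "u \<in> sphere 0 1" using u by (simp add: S0_def)
    ultimately have "v = radial_gauss M u" "w = radial_gauss M u" "dist v w > 0"
      using A(4) GM_iff by (auto intro: less_le_trans[rotated])
    then show False by simp
  qed
  ultimately show "u \<in> ?T - ?D" by blast
next
  fix u assume u: "u \<in> ?T - ?D"
  then obtain v where v: "(v, u) \<in> GM M" by auto
  then have us: "u \<in> sphere 0 1" by (auto simp: GM_def)
  have "\<exists>!v. outer_unit_normal M (radial_fun M u *\<^sub>R u) v"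
  proof (rule ex1I[of _ v])
    show "outer_unit_normal M (radial_fun M u *\<^sub>R u) v" using v GM_iff[OF us] by blast
    fix w assume "outer_unit_normal M (radial_fun M u *\<^sub>R u) w"
    then have w: "(w, u) \<in> GM M" using GM_iff[OF us] by blast
    show "w = v"
    proof (rule ccontr)
      assume "w \<noteq> v"
      then obtain k where k: "inverse (real (Suc k)) < dist w v"
        using reals_Archimedean[of "dist w v"] by auto
      have "w \<in> sphere 0 1" "v \<in> sphere 0 1" using v w by (auto simp: GM_def)
      then have "(w, v) \<in> sphere 0 1 \<times> sphere 0 1 \<and> ((w, v), u) \<in>
        {q. (fst (fst q), snd q) \<in> GM M \<and> (snd (fst q), snd q) \<in> GM M \<and> 1 / real (Suc k) \<le> dist (fst (fst q)) (snd (fst q))}"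
        using v w k by (simp add: divide_inverse less_imp_le)
      then have "u \<in> ?D" by blast
      then show False using u by blast
    qed
  qed
  then show "u \<in> S0 M" using us by (simp add: S0_def)
qed

lemma S0_borel:
  fixes M :: "'a::euclidean_space set"
  assumes M: "convex_body_o M"
  shows "S0 M \<in> sets borel"
proof -
  have G: "closed (GM M)" by (rule GM_closed[OF M])
  have GS: "GM M \<subseteq> sphere 0 1 \<times> sphere 0 1" by (auto simp: GM_def)
  have T: "closed {u. \<exists>v. v \<in> sphere 0 1 \<and> (v, u) \<in> GM M}"
    by (rule closed_proj[OF _ _ G GS]) auto
  have D: "closed {u. \<exists>vw. vw \<in> sphere 0 1 \<times> sphere 0 1 \<and> (vw, u) \<in>
        {q. (fst (fst q), snd q) \<in> GM M \<and> (snd (fst q), snd q) \<in> GM M \<and> 1 / real (Suc k) \<le> dist (fst (fst q)) (snd (fst q))}}"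
    for k
  proof (rule closed_proj)
    show "compact (sphere (0::'a) 1 \<times> sphere (0::'a) 1)" by (intro compact_Times) auto
    show "closed (sphere (0::'a) 1)" by simp
    have c1: "closed ((\<lambda>q::('a\<times>'a)\<times>'a. (fst (fst q), snd q)) -` GM M)"
      by (rule continuous_closed_vimage[OF G]) (intro continuous_intros)
    have c2: "closed ((\<lambda>q::('a\<times>'a)\<times>'a. (snd (fst q), snd q)) -` GM M)"
      by (rule continuous_closed_vimage[OF G]) (intro continuous_intros)
    have c3: "closed {q::('a\<times>'a)\<times>'a. 1 / real (Suc k) \<le> dist (fst (fst q)) (snd (fst q))}"
      by (intro closed_Collect_le continuous_intros)
    have eq: "{q. (fst (fst q), snd q) \<in> GM M \<and> (snd (fst q), snd q) \<in> GM M \<and> 1 / real (Suc k) \<le> dist (fst (fst q)) (snd (fst q))}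
       = ((\<lambda>q::('a\<times>'a)\<times>'a. (fst (fst q), snd q)) -` GM M) \<inter> ((\<lambda>q::('a\<times>'a)\<times>'a. (snd (fst q), snd q)) -` GM M) \<inter> {q. 1 / real (Suc k) \<le> dist (fst (fst q)) (snd (fst q))}"
      by auto
    have "closed (((\<lambda>q::('a\<times>'a)\<times>'a. (fst (fst q), snd q)) -` GM M) \<inter> ((\<lambda>q::('a\<times>'a)\<times>'a. (snd (fst q), snd q)) -` GM M) \<inter> {q. 1 / real (Suc k) \<le> dist (fst (fst q)) (snd (fst q))})"
      by (intro closed_Int c1 c2 c3)
    then show "closed {q. (fst (fst q), snd q) \<in> GM M \<and> (snd (fst q), snd q) \<in> GM M \<and> 1 / real (Suc k) \<le> dist (fst (fst q)) (snd (fst q))}"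
      unfolding eq .
    show "{q. (fst (fst q), snd q) \<in> GM M \<and> (snd (fst q), snd q) \<in> GM M \<and> 1 / real (Suc k) \<le> dist (fst (fst q)) (snd (fst q))}
       \<subseteq> (sphere 0 1 \<times> sphere 0 1) \<times> sphere 0 1"
      using GS by auto
  qed
  show ?thesis unfolding S0_eq
  proof (rule sets.Diff)
    show "{u. \<exists>v. v \<in> sphere 0 1 \<and> (v, u) \<in> GM M} \<in> sets borel" by (rule borel_closed[OF T])
    show "(\<Union>k. {u. \<exists>vw. vw \<in> sphere 0 1 \<times> sphere 0 1 \<and> (vw, u) \<in>
        {q. (fst (fst q), snd q) \<in> GM M \<and> (snd (fst q), snd q) \<in> GM M \<and> 1 / real (Suc k) \<le> dist (fst (fst q)) (snd (fst q))}}) \<in> sets borel"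
      by (rule sets.countable_UN) (use D borel_closed in blast)
  qed
qed

lemma alpha_cont:
  fixes M :: "'a::euclidean_space set"
  assumes M: "convex_body_o M"
  shows "continuous_on (S0 M) (radial_gauss M)"
proof -
  have fim: "radial_gauss M \<in> S0 M \<rightarrow> sphere 0 1" using alpha_S0 by blast
  have cl: "closed ((\<lambda>p. (snd p, fst p)) -` GM M)"
    by (rule continuous_closed_vimage[OF GM_closed[OF M]]) (intro continuous_intros)
  have "(\<lambda>x. (x, radial_gauss M x)) ` S0 M = (S0 M \<times> sphere 0 1) \<inter> ((\<lambda>p. (snd p, fst p)) -` GM M)"
  proof (intro set_eqI iffI)
    fix p assume "p \<in> (\<lambda>x. (x, radial_gauss M x)) ` S0 M"
    then show "p \<in> (S0 M \<times> sphere 0 1) \<inter> ((\<lambda>p. (snd p, fst p)) -` GM M)"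
      using alpha_S0 by auto
  next
    fix p assume p: "p \<in> (S0 M \<times> sphere 0 1) \<inter> ((\<lambda>p. (snd p, fst p)) -` GM M)"
    then obtain u v where uv: "p = (u, v)" "u \<in> S0 M" "(v, u) \<in> GM M" by auto
    then have "u \<in> sphere 0 1" by (auto simp: S0_def)
    then have "v = radial_gauss M u" using alpha_S0(4)[OF uv(2)] GM_iff uv by blast
    then show "p \<in> (\<lambda>x. (x, radial_gauss M x)) ` S0 M" using uv by auto
  qed
  then have "closedin (top_of_set (S0 M \<times> sphere 0 1)) ((\<lambda>x. (x, radial_gauss M x)) ` S0 M)"
    using cl by (auto simp: closedin_closed)
  then show ?thesis using continuous_closed_graph_eq[OF compact_sphere fim] by blast
qed


lemma nrm_cont: "continuous_on (UNIV - {0}) (\<lambda>x::'a::euclidean_space. x /\<^sub>R norm x)"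
  by (intro continuous_intros) auto

lemma nrm_meas: "(\<lambda>x::'a::euclidean_space. x /\<^sub>R norm x) \<in> borel_measurable borel"
  by measurable

lemma nrm_sphere: "x \<noteq> 0 \<Longrightarrow> x /\<^sub>R norm (x::'a::euclidean_space) \<in> sphere 0 1"
  by simp

lemma meas_S:
  fixes g :: "'a::euclidean_space \<Rightarrow> real"
  assumes S: "S \<subseteq> sphere 0 1" "S \<in> sets borel" and g: "continuous_on S g"
    and z: "\<And>u. u \<in> sphere 0 1 \<Longrightarrow> u \<notin> S \<Longrightarrow> g u = 0"
  shows "(\<lambda>x. indicator (UNIV - {0}) x * g (x /\<^sub>R norm x)) \<in> borel_measurable borel"
proof -
  let ?S' = "(UNIV - {0}) \<inter> (\<lambda>x::'a. x /\<^sub>R norm x) -` S"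
  have S': "?S' \<in> sets borel"
    by (intro sets.Int borel_open open_Diff open_UNIV closed_singleton measurable_sets_borel[OF nrm_meas S(2)])
  have c: "continuous_on ?S' (\<lambda>x. g (x /\<^sub>R norm x))"
    by (rule continuous_on_compose2[OF g continuous_on_subset[OF nrm_cont]]) auto
  have meas: "(\<lambda>x. indicator ?S' x *\<^sub>R g (x /\<^sub>R norm x)) \<in> borel_measurable borel"
    by (rule borel_measurable_continuous_on_indicator[OF S' c])
  have eq: "indicator ?S' x *\<^sub>R g (x /\<^sub>R norm x) = indicator (UNIV - {0}) x * g (x /\<^sub>R norm x)" for x
  proof (cases "x = 0")
    case True then show ?thesis by (simp add: indicator_def)
  next
    case False
    then have "x /\<^sub>R norm x \<in> sphere 0 1" by (rule nrm_sphere)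
    then show ?thesis using False z[of "x /\<^sub>R norm x"] by (auto simp: indicator_def)
  qed
  have "(\<lambda>x. indicator ?S' x *\<^sub>R g (x /\<^sub>R norm x)) = (\<lambda>x. indicator (UNIV - {0}) x * g (x /\<^sub>R norm x))"
    by (rule ext) (rule eq)
  with meas show ?thesis by simp
qed

lemma bound_S:
  fixes g :: "'a::euclidean_space \<Rightarrow> real"
  assumes b: "\<And>u. u \<in> sphere 0 1 \<Longrightarrow> \<bar>g u\<bar> \<le> B"
  shows "\<bar>indicator (UNIV - {0}) x * g (x /\<^sub>R norm x)\<bar> \<le> max 0 B"
proof (cases "x = 0")
  case True then show ?thesis by (simp add: indicator_def)
next
  case False
  then show ?thesis using b[OF nrm_sphere[OF False]] by (simp add: indicator_def)
qed

lemma cont_bound: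
  fixes g :: "'a::euclidean_space \<Rightarrow> real"
  assumes "continuous_on (sphere 0 1) g"
  obtains B where "\<And>u. u \<in> sphere 0 1 \<Longrightarrow> \<bar>g u\<bar> \<le> B"
proof -
  have "compact (g ` sphere 0 1)" by (rule compact_continuous_image[OF assms compact_sphere])
  then obtain B where "\<forall>y \<in> g ` sphere 0 1. norm y \<le> B" using compact_imp_bounded bounded_iff by metis
  then show ?thesis using that by (metis image_eqI real_norm_def)
qed

definition phi :: "'a::euclidean_space set \<Rightarrow> 'a set \<Rightarrow> real \<Rightarrow> 'a \<Rightarrow> real" where
  "phi M N p v = (support_fun N v / support_fun M v) powr p"

lemma phi_cont:
  fixes M N :: "'a::euclidean_space set"
  assumes M: "convex_body_o M" and N: "convex_body_o N"
  shows "continuous_on (sphere 0 1) (phi M N p)"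
proof -
  have cM: "compact M" "M \<noteq> {}" "0 \<in> interior M" using M interior_subset by (auto simp: convex_body_o_def)
  have cN: "compact N" "N \<noteq> {}" "0 \<in> interior N" using N interior_subset by (auto simp: convex_body_o_def)
  have pos: "\<And>v. v \<in> sphere 0 1 \<Longrightarrow> support_fun N v / support_fun M v \<noteq> 0"
    using sf_pos[OF cM(1,3)] sf_pos[OF cN(1,3)] by (metis divide_pos_pos less_irrefl mem_sphere_0)
  show ?thesis unfolding phi_def
    by (intro continuous_on_powr continuous_on_divide continuous_on_const
        continuous_on_subset[OF sf_cont[OF cN(1,2)]] continuous_on_subset[OF sf_cont[OF cM(1,2)]])
      (use pos sf_pos[OF cM(1,3)] in \<open>auto simp: less_imp_neq[symmetric]\<close>)
qed

lemma f1_props: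
  fixes M N :: "'a::euclidean_space set"
  assumes M: "convex_body_o M" and N: "convex_body_o N"
  shows "(\<lambda>x. indicator (UNIV - {0}) x * phi M N p (radial_gauss M (x /\<^sub>R norm x))) \<in> borel_measurable borel"
    "\<exists>B. \<forall>x. \<bar>indicator (UNIV - {0}) x * phi M N p (radial_gauss M (x /\<^sub>R norm x))\<bar> \<le> B"
proof -
  have cN: "N \<noteq> {}" "M \<noteq> {}" using N M interior_subset by (auto simp: convex_body_o_def)
  have ph0: "phi M N p 0 = 0" unfolding phi_def using sf_zero[OF cN(1)] sf_zero[OF cN(2)] by simp
  obtain B where B: "\<And>u. u \<in> sphere 0 1 \<Longrightarrow> \<bar>phi M N p u\<bar> \<le> B" using cont_bound[OF phi_cont[OF M N]] by blast
  show "(\<lambda>x. indicator (UNIV - {0}) x * phi M N p (radial_gauss M (x /\<^sub>R norm x))) \<in> borel_measurable borel"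
  proof (rule meas_S[of "S0 M"])
    show "S0 M \<subseteq> sphere 0 1" by (auto simp: S0_def)
    show "S0 M \<in> sets borel" by (rule S0_borel[OF M])
    show "continuous_on (S0 M) (\<lambda>u. phi M N p (radial_gauss M u))"
      by (rule continuous_on_compose2[OF phi_cont[OF M N] alpha_cont[OF M]]) (use alpha_S0 in blast)
    show "\<And>u. u \<in> sphere 0 1 \<Longrightarrow> u \<notin> S0 M \<Longrightarrow> phi M N p (radial_gauss M u) = 0"
      using alpha_notS0[of _ M] ph0 by simp
  qed
  have "\<bar>phi M N p (radial_gauss M u)\<bar> \<le> max 0 B" for u
    using alpha_range[of M u] B[of "radial_gauss M u"] ph0 by auto
  then show "\<exists>B. \<forall>x. \<bar>indicator (UNIV - {0}) x * phi M N p (radial_gauss M (x /\<^sub>R norm x))\<bar> \<le> B"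
    by (intro exI[of _ "max 0 B"] allI) (auto simp: indicator_def)
qed

lemma f2_props:
  fixes g :: "'a::euclidean_space \<Rightarrow> real"
  assumes g: "continuous_on (sphere 0 1) g"
  shows "(\<lambda>x. indicator (UNIV - {0}) x * g (x /\<^sub>R norm x)) \<in> borel_measurable borel"
    "\<exists>B. \<forall>x. \<bar>indicator (UNIV - {0}) x * g (x /\<^sub>R norm x)\<bar> \<le> B"
proof -
  show "(\<lambda>x. indicator (UNIV - {0}) x * g (x /\<^sub>R norm x)) \<in> borel_measurable borel"
    by (rule meas_S[OF order_refl _ g]) auto
  obtain B where "\<And>u. u \<in> sphere 0 1 \<Longrightarrow> \<bar>g u\<bar> \<le> B" using cont_bound[OF g] by blast
  then show "\<exists>B. \<forall>x. \<bar>indicator (UNIV - {0}) x * g (x /\<^sub>R norm x)\<bar> \<le> B"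
    using bound_S by blast
qed


definition FF :: "'a::euclidean_space set \<Rightarrow> 'a set \<Rightarrow> 'a set \<Rightarrow> real \<Rightarrow> real \<Rightarrow> real \<Rightarrow> 'a \<Rightarrow> real" where
  "FF M N Q p q j x = indicator (ball 0 1 - {0}) x *
     ((support_fun N (radial_gauss M (x /\<^sub>R norm x)) / support_fun M (radial_gauss M (x /\<^sub>R norm x))) powr p
      * radial_fun M (x /\<^sub>R norm x) powr q * radial_fun Q (x /\<^sub>R norm x) powr (real DIM('a) - q - j))"

lemma mq_eq: "mixed_quermass p q j M N Q = integral\<^sup>L lebesgue (FF M N Q p q j)"
  unfolding mixed_quermass_def sphere_integral_def FF_def by simp

lemma integ:
  fixes M N Q :: "'a::euclidean_space set"
  assumes M: "convex_body_o M" and N: "convex_body_o N" and Q: "star_body_o Q"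
  shows "integrable lebesgue (FF M N Q p q j)"
proof -
  let ?e = "real DIM('a) - q - j"
  let ?psi = "\<lambda>u. radial_fun M u powr q * radial_fun Q u powr ?e"
  have psic: "continuous_on (sphere 0 1) ?psi"
  proof (intro continuous_on_mult continuous_on_powr continuous_on_const cb_rcont[OF M])
    show "continuous_on (sphere 0 1) (radial_fun Q)" using Q by (simp add: star_body_o_def)
    show "\<forall>x\<in>sphere 0 1. radial_fun M x \<noteq> 0" using cb_pos(1)[OF M] sphere_nz by (metis less_irrefl)
    show "\<forall>x\<in>sphere 0 1. radial_fun Q x \<noteq> 0" using Q by (auto simp: star_body_o_def)
  qed
  let ?f1 = "\<lambda>x. indicator (UNIV - {0}) x * phi M N p (radial_gauss M (x /\<^sub>R norm x))"
  let ?f2 = "\<lambda>x. indicator (UNIV - {0}) x * ?psi (x /\<^sub>R norm x)"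
  note P1 = f1_props[OF M N, of p] and P2 = f2_props[OF psic]
  obtain B1 where B1: "\<And>x. \<bar>?f1 x\<bar> \<le> B1" using P1(2) by blast
  obtain B2 where B2: "\<And>x. \<bar>?f2 x\<bar> \<le> B2" using P2(2) by blast
  have meas: "(\<lambda>x. ?f1 x * ?f2 x) \<in> borel_measurable borel"
    using P1(1) P2(1) by (rule borel_measurable_times)
  have bd: "\<bar>?f1 x * ?f2 x\<bar> \<le> B1 * B2" for x
  proof -
    have "\<bar>?f1 x * ?f2 x\<bar> = \<bar>?f1 x\<bar> * \<bar>?f2 x\<bar>" by (rule abs_mult)
    also have "\<dots> \<le> B1 * B2" by (rule mult_mono[OF B1 B2]) (use B1[of x] in auto)
    finally show ?thesis .
  qed
  have "integrable lborel (\<lambda>x. indicator (ball 0 1) x *\<^sub>R (?f1 x * ?f2 x))"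
  proof (rule integrableI_bounded_set_indicator)
    show "ball 0 1 \<in> sets lborel" by simp
    show "(\<lambda>x. ?f1 x * ?f2 x) \<in> borel_measurable lborel" using meas by simp
    show "emeasure lborel (ball (0::'a) 1) < \<infinity>" by (rule emeasure_bounded_finite) simp
    show "AE x in lborel. x \<in> ball 0 1 \<longrightarrow> norm (?f1 x * ?f2 x) \<le> B1 * B2"
      using bd by simp
  qed
  moreover have "(\<lambda>x. indicator (ball 0 1) x *\<^sub>R (?f1 x * ?f2 x)) = FF M N Q p q j"
  proof
    fix x :: 'a
    show "indicator (ball 0 1) x *\<^sub>R (?f1 x * ?f2 x) = FF M N Q p q j x"
      unfolding FF_def phi_def by (simp add: indicator_def mult.assoc)
  qed
  ultimately have I: "integrable lborel (FF M N Q p q j)" by simp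
  have "FF M N Q p q j \<in> borel_measurable lborel"
    using borel_measurable_integrable[OF I] .
  then show ?thesis using I integrable_completion by blast
qed

lemma maxmin_sum: "(f::real \<Rightarrow> real) (max (a::real) b) + f (min a b) = f a + f b"
proof (cases "a \<le> b")
  case True
  then show ?thesis by (simp add: max_def min_def add.commute)
next
  case False
  then show ?thesis by (simp add: max_def min_def)
qed

lemma part1:
  fixes M N1 N2 Q :: "'a::euclidean_space set"
  assumes M: "convex_body_o M" and Q: "star_body_o Q" and N1: "convex_body_o N1"
    and N2: "convex_body_o N2" and NU: "convex_body_o (N1 \<union> N2)"
  shows "mixed_quermass p q j M (N1 \<union> N2) Q + mixed_quermass p q j M (N1 \<inter> N2) Q
            = mixed_quermass p q j M N1 Q + mixed_quermass p q j M N2 Q"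
proof -
  have z: "0 \<in> N1" "0 \<in> N2" using subsetD[OF interior_subset] N1 N2 unfolding convex_body_o_def by blast+
  have c: "compact N1" "compact N2" "N1 \<inter> N2 \<noteq> {}" "N1 \<noteq> {}" "N2 \<noteq> {}" "convex (N1 \<union> N2)"
    using N1 N2 NU z by (auto simp: convex_body_o_def)
  have pw: "FF M (N1 \<inter> N2) Q p q j x = FF M N1 Q p q j x + FF M N2 Q p q j x - FF M (N1 \<union> N2) Q p q j x" for x
  proof -
    let ?v = "radial_gauss M (x /\<^sub>R norm x)"
    let ?g = "\<lambda>t. indicator (ball 0 1 - {0}) x *
     ((t / support_fun M ?v) powr p
      * radial_fun M (x /\<^sub>R norm x) powr q * radial_fun Q (x /\<^sub>R norm x) powr (real DIM('a) - q - j))"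
    have "FF M (N1 \<union> N2) Q p q j x = ?g (max (support_fun N1 ?v) (support_fun N2 ?v))"
      unfolding FF_def sf_union[OF c(1,2,4,5)] ..
    moreover have "FF M (N1 \<inter> N2) Q p q j x = ?g (min (support_fun N1 ?v) (support_fun N2 ?v))"
      unfolding FF_def sf_inter[OF c(1,2,3,6)] ..
    moreover have "FF M N1 Q p q j x = ?g (support_fun N1 ?v)" "FF M N2 Q p q j x = ?g (support_fun N2 ?v)"
      unfolding FF_def by simp_all
    ultimately show ?thesis using maxmin_sum[of ?g "support_fun N1 ?v" "support_fun N2 ?v"] by linarith
  qed
  have i1: "integrable lebesgue (FF M N1 Q p q j)" by (rule integ[OF M N1 Q])
  have i2: "integrable lebesgue (FF M N2 Q p q j)" by (rule integ[OF M N2 Q])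
  have iu: "integrable lebesgue (FF M (N1 \<union> N2) Q p q j)" by (rule integ[OF M NU Q])
  have "integral\<^sup>L lebesgue (FF M (N1 \<inter> N2) Q p q j) =
      integral\<^sup>L lebesgue (\<lambda>x. FF M N1 Q p q j x + FF M N2 Q p q j x - FF M (N1 \<union> N2) Q p q j x)"
    by (rule Bochner_Integration.integral_cong[OF refl pw])
  also have "\<dots> = integral\<^sup>L lebesgue (FF M N1 Q p q j) + integral\<^sup>L lebesgue (FF M N2 Q p q j)
      - integral\<^sup>L lebesgue (FF M (N1 \<union> N2) Q p q j)"
    using i1 i2 iu by (simp add: integral_diff integral_add)
  finally show ?thesis unfolding mq_eq by simp
qed

lemma part2:
  fixes M N Q1 Q2 :: "'a::euclidean_space set"
  assumes M: "convex_body_o M" and N: "convex_body_o N" and Q1: "star_body_o Q1"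
    and Q2: "star_body_o Q2"
  shows "mixed_quermass p q j M N (Q1 \<union> Q2) + mixed_quermass p q j M N (Q1 \<inter> Q2)
            = mixed_quermass p q j M N Q1 + mixed_quermass p q j M N Q2"
proof -
  have pw: "FF M N (Q1 \<inter> Q2) p q j x = FF M N Q1 p q j x + FF M N Q2 p q j x - FF M N (Q1 \<union> Q2) p q j x" for x
  proof (cases "x = 0")
    case True then show ?thesis by (simp add: FF_def)
  next
    case False
    then have u: "x /\<^sub>R norm x \<noteq> 0" by simp
    let ?u = "x /\<^sub>R norm x"
    let ?v = "radial_gauss M (x /\<^sub>R norm x)"
    let ?g = "\<lambda>t. indicator (ball 0 1 - {0}) x *
     ((support_fun N ?v / support_fun M ?v) powr p
      * radial_fun M (x /\<^sub>R norm x) powr q * t powr (real DIM('a) - q - j))"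
    have "FF M N (Q1 \<union> Q2) p q j x = ?g (max (radial_fun Q1 ?u) (radial_fun Q2 ?u))"
      unfolding FF_def rf_union[OF Q1 Q2 u] ..
    moreover have "FF M N (Q1 \<inter> Q2) p q j x = ?g (min (radial_fun Q1 ?u) (radial_fun Q2 ?u))"
      unfolding FF_def rf_inter[OF Q1 Q2 u] ..
    moreover have "FF M N Q1 p q j x = ?g (radial_fun Q1 ?u)" "FF M N Q2 p q j x = ?g (radial_fun Q2 ?u)"
      unfolding FF_def by simp_all
    ultimately show ?thesis using maxmin_sum[of ?g "radial_fun Q1 ?u" "radial_fun Q2 ?u"] by linarith
  qed
  have i1: "integrable lebesgue (FF M N Q1 p q j)" by (rule integ[OF M N Q1])
  have i2: "integrable lebesgue (FF M N Q2 p q j)" by (rule integ[OF M N Q2])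
  have iu: "integrable lebesgue (FF M N (Q1 \<union> Q2) p q j)" by (rule integ[OF M N star_union[OF Q1 Q2]])
  have "integral\<^sup>L lebesgue (FF M N (Q1 \<inter> Q2) p q j) =
      integral\<^sup>L lebesgue (\<lambda>x. FF M N Q1 p q j x + FF M N Q2 p q j x - FF M N (Q1 \<union> Q2) p q j x)"
    by (rule Bochner_Integration.integral_cong[OF refl pw])
  also have "\<dots> = integral\<^sup>L lebesgue (FF M N Q1 p q j) + integral\<^sup>L lebesgue (FF M N Q2 p q j)
      - integral\<^sup>L lebesgue (FF M N (Q1 \<union> Q2) p q j)"
    using i1 i2 iu by (simp add: integral_diff integral_add)
  finally show ?thesis unfolding mq_eq by simp
qed

theorem proposition4p3:
  fixes p q j :: real and M :: "'a::euclidean_space set"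
  assumes "j \<noteq> real DIM('a)" and "convex_body_o M"
  shows "(\<forall>Q N1 N2. star_body_o Q \<and> convex_body_o N1 \<and> convex_body_o N2
            \<and> convex_body_o (N1 \<union> N2) \<longrightarrow>
            mixed_quermass p q j M (N1 \<union> N2) Q + mixed_quermass p q j M (N1 \<inter> N2) Q
            = mixed_quermass p q j M N1 Q + mixed_quermass p q j M N2 Q)
       \<and> (\<forall>N Q1 Q2. convex_body_o N \<and> star_body_o Q1 \<and> star_body_o Q2 \<longrightarrow>
            mixed_quermass p q j M N (Q1 \<union> Q2) + mixed_quermass p q j M N (Q1 \<inter> Q2)
            = mixed_quermass p q j M N Q1 + mixed_quermass p q j M N Q2)"
  using part1[OF assms(2)] part2[OF assms(2)] by blast

end
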